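(* Let $G$ be a connected graph with node set $V(G)$, let $N_v$ denote the set of neighbors of $v$, and let $A_1\neq\emptyset$ be the set of initially awake nodes. Define $A_0=\emptyset$ and, for $i\ge 1$, $S_i=\left(\bigcup_{v\in A_i}N_v\right)\cap\left(V(G)\setminus(A_i\cup A_{i-1})\right)$ and $A_{i+1}=S_i$. For $i\ge1$, let $v_1^{(i)},\dots,v_{|A_i|}^{(i)}$ be the elements of $A_i$ in increasing order of ID and define $S_{v_j^{(i)}}^{(i)}=N_{v_j^{(i)}}\cap\left(S_i\setminus\bigcup_{k\in[j-1]}S_{v_k^{(i)}}^{(i)}\right)$. Then for every node $v$: (1) $v$ is an actor of at most one epoch, that is, there is a unique $i$ with $v\in A_i$; and (2) $S_v^{(i)}\cap S_w^{(j)}=\emptyset$ for every node $w\neq v$, where $i$ and $j$ are the unique indices with $v\in A_i$ and $w\in A_j$.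
   Context: Nodes have unique IDs from $[n]$. The nodes of $A_i$ are called the actors of epoch $i$. *)

theory Defs
  imports Main
begin

text \<open>Nodes are identified with their IDs (natural numbers). The graph is given by a
finite node set V and a symmetric irreflexive edge relation E on V.\<close>

definition nbrs :: "nat set \<Rightarrow> (nat \<Rightarrow> nat \<Rightarrow> bool) \<Rightarrow> nat \<Rightarrow> nat set" where
  "nbrs V E v = {u \<in> V. E v u}"

fun epoch :: "nat set \<Rightarrow> (nat \<Rightarrow> nat \<Rightarrow> bool) \<Rightarrow> nat set \<Rightarrow> nat \<Rightarrow> nat set" where
  "epoch V E A1 0 = {}"
| "epoch V E A1 (Suc 0) = A1"
| "epoch V E A1 (Suc (Suc i)) =
     (\<Union>v\<in>epoch V E A1 (Suc i). nbrs V E v) \<inter> (V - (epoch V E A1 (Suc i) \<union> epoch V E A1 i))"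

definition Sset :: "nat set \<Rightarrow> (nat \<Rightarrow> nat \<Rightarrow> bool) \<Rightarrow> nat set \<Rightarrow> nat \<Rightarrow> nat set" where
  "Sset V E A1 i =
     (\<Union>v\<in>epoch V E A1 i. nbrs V E v) \<inter> (V - (epoch V E A1 i \<union> epoch V E A1 (i - 1)))"

text \<open>assign N S acc [v_j, ..., v_m]: processes the actors in the given order, where acc is
the union of the sets already assigned to earlier actors; v_j gets N v_j \<inter> (S - acc).\<close>
primrec assign :: "(nat \<Rightarrow> nat set) \<Rightarrow> nat set \<Rightarrow> nat set \<Rightarrow> nat list \<Rightarrow> nat \<Rightarrow> nat set" where
  "assign N S acc [] = (\<lambda>_. {})"
| "assign N S acc (v # vs) =
     (let s = N v \<inter> (S - acc) in (assign N S (acc \<union> s) vs)(v := s))"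

definition Sv :: "nat set \<Rightarrow> (nat \<Rightarrow> nat \<Rightarrow> bool) \<Rightarrow> nat set \<Rightarrow> nat \<Rightarrow> nat \<Rightarrow> nat set" where
  "Sv V E A1 i v = assign (nbrs V E) (Sset V E A1 i) {} (sorted_list_of_set (epoch V E A1 i)) v"

end

theory Submission
  imports Defs
begin

fun Rm :: "nat set \<Rightarrow> (nat \<Rightarrow> nat \<Rightarrow> bool) \<Rightarrow> nat set \<Rightarrow> nat \<Rightarrow> nat set" where
  "Rm V E A1 0 = {}"
| "Rm V E A1 (Suc 0) = A1"
| "Rm V E A1 (Suc (Suc k)) = Rm V E A1 (Suc k) \<union> (\<Union>v\<in>Rm V E A1 (Suc k). nbrs V E v)"

lemma nat3_cases[case_names Z O S]:
  "(k = 0 \<Longrightarrow> P) \<Longrightarrow> (k = Suc 0 \<Longrightarrow> P) \<Longrightarrow> (\<And>m. k = Suc (Suc m) \<Longrightarrow> P) \<Longrightarrow> P"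
  by (metis not0_implies_Suc)

lemma Rm_Suc: "Rm V E A1 k \<subseteq> Rm V E A1 (Suc k)"
  by (cases k rule: nat3_cases) auto

lemma Rm_mono: "i \<le> j \<Longrightarrow> Rm V E A1 i \<subseteq> Rm V E A1 j"
  using lift_Suc_mono_le[of "Rm V E A1"] Rm_Suc by blast

lemma Rm_nbrs: "y \<in> Rm V E A1 k \<Longrightarrow> nbrs V E y \<subseteq> Rm V E A1 (Suc k)"
  by (cases k rule: nat3_cases) auto

lemma epoch_Rm:
  assumes sym: "\<And>u w. E u w \<Longrightarrow> E w u"
    and EV: "\<And>u w. E u w \<Longrightarrow> u \<in> V \<and> w \<in> V"
  shows "epoch V E A1 k = Rm V E A1 k - Rm V E A1 (k - 1)"
proof (induction k rule: less_induct)
  case (less k)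
  show ?case
  proof (cases k rule: nat3_cases)
    case (S m)
    have I1: "epoch V E A1 (Suc m) = Rm V E A1 (Suc m) - Rm V E A1 m" using less S by simp
    have I0: "epoch V E A1 m = Rm V E A1 m - Rm V E A1 (m - 1)" using less S by simp
    have M1: "Rm V E A1 m \<subseteq> Rm V E A1 (Suc m)" by (rule Rm_Suc)
    have M0: "Rm V E A1 (m-1) \<subseteq> Rm V E A1 m" by (rule Rm_mono) simp
    have N1: "\<And>y. y \<in> Rm V E A1 m \<Longrightarrow> nbrs V E y \<subseteq> Rm V E A1 (Suc m)" by (rule Rm_nbrs)
    have N0: "\<And>y. y \<in> Rm V E A1 (m-1) \<Longrightarrow> nbrs V E y \<subseteq> Rm V E A1 m"
      using Rm_nbrs[of _ V E A1 "m-1"] by (cases m) auto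
    have "epoch V E A1 (Suc (Suc m)) = Rm V E A1 (Suc (Suc m)) - Rm V E A1 (Suc m)"
    proof
      show "epoch V E A1 (Suc (Suc m)) \<subseteq> Rm V E A1 (Suc (Suc m)) - Rm V E A1 (Suc m)"
      proof
        fix x assume x: "x \<in> epoch V E A1 (Suc (Suc m))"
        then obtain y where y: "y \<in> Rm V E A1 (Suc m)" "y \<notin> Rm V E A1 m" "x \<in> nbrs V E y"
          "x \<notin> Rm V E A1 (Suc m) - Rm V E A1 m" "x \<notin> Rm V E A1 m - Rm V E A1 (m-1)"
          by (auto simp: I1 I0 simp del: Rm.simps)
        have "x \<notin> Rm V E A1 (Suc m)"
        proof
          assume "x \<in> Rm V E A1 (Suc m)"
          with y have "x \<in> Rm V E A1 (m-1)" by auto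
          moreover have "y \<in> nbrs V E x" using y(3) sym EV unfolding nbrs_def by auto
          ultimately show False using N0 y(2) by blast
        qed
        then show "x \<in> Rm V E A1 (Suc (Suc m)) - Rm V E A1 (Suc m)" using y by auto
      qed
    next
      show "Rm V E A1 (Suc (Suc m)) - Rm V E A1 (Suc m) \<subseteq> epoch V E A1 (Suc (Suc m))"
      proof
        fix x assume x: "x \<in> Rm V E A1 (Suc (Suc m)) - Rm V E A1 (Suc m)"
        then obtain y where y: "y \<in> Rm V E A1 (Suc m)" "x \<in> nbrs V E y" "x \<notin> Rm V E A1 (Suc m)" by auto
        have "y \<notin> Rm V E A1 m" using N1 y by blast
        then show "x \<in> epoch V E A1 (Suc (Suc m))" using y M1 M0
          by (auto simp: I1 I0 nbrs_def simp del: Rm.simps)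
      qed
    qed
    then show ?thesis using S by simp
  qed auto
qed

lemma epoch_unique:
  assumes sym: "\<And>u w. E u w \<Longrightarrow> E w u"
    and EV: "\<And>u w. E u w \<Longrightarrow> u \<in> V \<and> w \<in> V"
    and "x \<in> epoch V E A1 i" "x \<in> epoch V E A1 j"
  shows "i = j"
proof (rule ccontr)
  assume "i \<noteq> j"
  have a: "x \<in> Rm V E A1 i - Rm V E A1 (i - 1)" "x \<in> Rm V E A1 j - Rm V E A1 (j - 1)"
    using assms epoch_Rm[where E=E and V=V, OF sym EV] by auto
  have "i \<noteq> 0" using a(1) by (cases i) auto
  have "j \<noteq> 0" using a(2) by (cases j) auto
  show False
  proof (cases "i < j")
    case True then have "Rm V E A1 i \<subseteq> Rm V E A1 (j-1)" by (intro Rm_mono) simp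
    then show False using a by auto
  next
    case False then have "Rm V E A1 j \<subseteq> Rm V E A1 (i-1)" using \<open>i \<noteq> j\<close> by (intro Rm_mono) simp
    then show False using a by auto
  qed
qed

lemma reach:
  assumes "E\<^sup>*\<^sup>* a v" "a \<in> A1"
    and EV: "\<And>u w. E u w \<Longrightarrow> u \<in> V \<and> w \<in> V"
  shows "\<exists>k. v \<in> Rm V E A1 k"
  using assms(1)
proof induction
  case base then show ?case using assms(2) by (intro exI[of _ 1]) simp
next
  case (step u w)
  then obtain k where "u \<in> Rm V E A1 k" by blast
  then have "w \<in> Rm V E A1 (Suc k)" using Rm_nbrs[of u V E A1 k] step EV unfolding nbrs_def by blast
  then show ?case by blast
qed

lemma Rm_epoch:
  assumes sym: "\<And>u w. E u w \<Longrightarrow> E w u"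
    and EV: "\<And>u w. E u w \<Longrightarrow> u \<in> V \<and> w \<in> V"
    and "v \<in> Rm V E A1 k"
  shows "\<exists>i. v \<in> epoch V E A1 i"
proof -
  define i where "i = (LEAST i. v \<in> Rm V E A1 i)"
  have "v \<in> Rm V E A1 i" unfolding i_def by (rule LeastI) (rule assms(3))
  moreover have "v \<notin> Rm V E A1 (i - 1)"
  proof
    assume h: "v \<in> Rm V E A1 (i - 1)"
    have "i \<noteq> 0" using \<open>v \<in> Rm V E A1 i\<close> by (cases i) auto
    then have "i - 1 < i" by simp
    then show False using h not_less_Least[of "i-1"] unfolding i_def by blast
  qed
  ultimately show ?thesis using epoch_Rm[where E=E and V=V, OF sym EV] by blast
qed

lemma assign_sub: "assign N S acc xs v \<subseteq> S - acc"
  by (induction xs arbitrary: acc) (auto simp: Let_def)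

lemma assign_disj: "v \<noteq> w \<Longrightarrow> assign N S acc xs v \<inter> assign N S acc xs w = {}"
proof (induction xs arbitrary: acc)
  case Nil then show ?case by simp
next
  case (Cons x xs)
  let ?s = "N x \<inter> (S - acc)"
  have r: "\<And>u. assign N S (acc \<union> ?s) xs u \<inter> ?s = {}" using assign_sub by blast
  show ?case using Cons.IH[OF Cons.prems, of "acc \<union> ?s"] r[of v] r[of w] Cons.prems
    by (auto simp: Let_def)
qed

lemma Sset_epoch: "1 \<le> i \<Longrightarrow> Sset V E A1 i = epoch V E A1 (Suc i)"
  by (cases i) (auto simp: Sset_def)

theorem lemma3:
  fixes V :: "nat set" and E :: "nat \<Rightarrow> nat \<Rightarrow> bool" and A1 :: "nat set"
  assumes "finite V"
    and EV: "\<And>u w. E u w \<Longrightarrow> u \<in> V \<and> w \<in> V"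
    and sym: "\<And>u w. E u w \<Longrightarrow> E w u"
    and "\<And>u. \<not> E u u"
    and conn: "\<And>u w. u \<in> V \<Longrightarrow> w \<in> V \<Longrightarrow> E\<^sup>*\<^sup>* u w"
    and "A1 \<noteq> {}" and "A1 \<subseteq> V"
  shows "\<forall>v\<in>V. (\<exists>!i. v \<in> epoch V E A1 i) \<and>
           (\<forall>w\<in>V. w \<noteq> v \<longrightarrow>
              Sv V E A1 (THE i. v \<in> epoch V E A1 i) v \<inter> Sv V E A1 (THE j. w \<in> epoch V E A1 j) w = {})"
proof -
  obtain a where a: "a \<in> A1" using assms(6) by blast
  have ex1: "\<exists>!i. v \<in> epoch V E A1 i" if vV: "v \<in> V" for v
  proof -
    obtain k where "v \<in> Rm V E A1 k" using reach[where E=E and V=V, OF conn[OF _ vV] a EV] a assms(7) by blast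
    then obtain i where "v \<in> epoch V E A1 i" using Rm_epoch[where E=E and V=V, OF sym EV] by blast
    then show ?thesis using epoch_unique[where E=E and V=V, OF sym EV] by blast
  qed
  have th: "v \<in> epoch V E A1 (THE i. v \<in> epoch V E A1 i)" if "v \<in> V" for v
    using theI'[OF ex1[OF that]] .
  have pos: "1 \<le> i" if "v \<in> epoch V E A1 i" for v i using that by (cases i) auto
  show ?thesis
  proof (intro ballI conjI impI)
    fix v assume v: "v \<in> V"
    show "\<exists>!i. v \<in> epoch V E A1 i" using ex1[OF v] .
    fix w assume w: "w \<in> V" "w \<noteq> v"
    define i where "i = (THE i. v \<in> epoch V E A1 i)"
    define j where "j = (THE i. w \<in> epoch V E A1 i)"
    have vi: "v \<in> epoch V E A1 i" and wj: "w \<in> epoch V E A1 j"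
      using th[OF v] th[OF w(1)] unfolding i_def j_def by auto
    have si: "Sv V E A1 i v \<subseteq> epoch V E A1 (Suc i)"
      using assign_sub Sset_epoch[OF pos[OF vi]] unfolding Sv_def by blast
    have sj: "Sv V E A1 j w \<subseteq> epoch V E A1 (Suc j)"
      using assign_sub Sset_epoch[OF pos[OF wj]] unfolding Sv_def by blast
    have "Sv V E A1 i v \<inter> Sv V E A1 j w = {}"
    proof (cases "i = j")
      case True
      have "v \<noteq> w" using w(2) by auto
      then show ?thesis unfolding Sv_def True by (rule assign_disj)
    next
      case False
      have "epoch V E A1 (Suc i) \<inter> epoch V E A1 (Suc j) = {}"
        using epoch_unique[where E=E and V=V, OF sym EV, of _ A1 "Suc i" "Suc j"] False by auto
      then show ?thesis using si sj by blast
    qed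
    then show "Sv V E A1 (THE i. v \<in> epoch V E A1 i) v \<inter> Sv V E A1 (THE j. w \<in> epoch V E A1 j) w = {}"
      by (simp add: i_def j_def)
  qed
qed

end
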